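(* There is a polynomial-time computable retraction from $\mathcal B$ onto the set $\Sigma^{**}$ of length-monotone string functions, i.e. a polynomial-time computable total functional $R\colon\mathcal B\to\mathcal B$ with $R(\mathcal B)\subseteq\Sigma^{**}$ and $R(\varphi)=\varphi$ for all $\varphi\in\Sigma^{**}$.
   Context: $\Sigma=\{0,1\}$, $\mathcal B=(\Sigma^* )^{\Sigma^*}$ is the set of total string functions. $\varphi\in\mathcal B$ is length-monotone if $|\mathbf a|\le|\mathbf b|$ implies $|\varphi(\mathbf a)|\le|\varphi(\mathbf b)|$ for all strings; $\Sigma^{**}$ denotes the set of length-monotone string functions. An oracle Turing machine $M^?$ with oracle $\varphi$ replaces, upon entering its query state, the query-tape content $\mathbf b$ by $\varphi(\mathbf b)$ in one time step; $\operatorname{time}_{M^\varphi}(\mathbf a)$ is its number of steps on input $\mathbf a$. The size function is $|\varphi|(n)=\max\{|\varphi(\mathbf a)|:|\mathbf a|\le n\}$. Second-order polynomials are the smallest class of functions $\mathbb N^{\mathbb N}\times\mathbb N\to\mathbb N$ containing all $(l,n)\mapsto p(n)$ for polynomials $p$ with natural coefficients and closed under pointwise sum, pointwise product, and $P\mapsto P^+$, $P^+(l,n)=l(P(l,n))$. A total functional $F\colon\mathcal B\to\mathcal B$ is polynomial-time computable if some oracle machine $M^?$ with $M^\varphi=F(\varphi)$ for all $\varphi$ satisfies $\operatorname{time}_{M^\varphi}(\mathbf a)\le P(|\varphi|,|\mathbf a|)$ for all $\varphi,\mathbf a$, for some second-order polynomial $P$. *)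

theory Defs
  imports Main
begin

text \<open>Strings over Sigma = {0,1} are bool lists (False = 0, True = 1).
  The space B of total string functions is bool list => bool list.\<close>

type_synonym str = "bool list"
type_synonym strfun = "str \<Rightarrow> str"

definition length_monotone :: "strfun \<Rightarrow> bool" where
  "length_monotone \<phi> \<longleftrightarrow>
     (\<forall>a b. length a \<le> length b \<longrightarrow> length (\<phi> a) \<le> length (\<phi> b))"

definition sizefun :: "strfun \<Rightarrow> nat \<Rightarrow> nat" where
  "sizefun \<phi> n = Max ((\<lambda>a. length (\<phi> a)) ` {a :: str. length a \<le> n})"

inductive second_order_poly :: "((nat \<Rightarrow> nat) \<Rightarrow> nat \<Rightarrow> nat) \<Rightarrow> bool" where
  sop_const: "second_order_poly (\<lambda>l n. c)"
| sop_var:   "second_order_poly (\<lambda>l n. n)"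
| sop_add:   "second_order_poly P \<Longrightarrow> second_order_poly Q \<Longrightarrow> second_order_poly (\<lambda>l n. P l n + Q l n)"
| sop_mult:  "second_order_poly P \<Longrightarrow> second_order_poly Q \<Longrightarrow> second_order_poly (\<lambda>l n. P l n * Q l n)"
| sop_app:   "second_order_poly P \<Longrightarrow> second_order_poly (\<lambda>l n. l (P l n))"

text \<open>A machine has ntapes >= 3 two-way infinite tapes
  (tape 0: input tape, tape 1: query tape, tape 2: output tape, the others work tapes),
  finitely many states 0..<nstates and tape symbols 0..<nsyms, where symbol 0 is the
  blank, symbol 1 encodes the bit 0 (False) and symbol 2 encodes the bit 1 (True).
  The transition function maps a non-halting, non-query state and the tuple of scanned
  symbols to a new state, the symbols to be written and head moves in {-1,0,1}.\<close>
record otm =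
  ntapes  :: nat
  nstates :: nat
  nsyms   :: nat
  delta   :: "nat \<Rightarrow> nat list \<Rightarrow> nat \<times> nat list \<times> int list"
  qstart  :: nat
  qhalt   :: nat
  qquery  :: nat
  qanswer :: nat

definition wf_otm :: "otm \<Rightarrow> bool" where
  "wf_otm M \<longleftrightarrow>
     ntapes M \<ge> 3 \<and> nsyms M \<ge> 3 \<and>
     qstart M < nstates M \<and> qhalt M < nstates M \<and> qquery M < nstates M \<and>
     qanswer M < nstates M \<and> qhalt M \<noteq> qquery M \<and>
     (\<forall>q syms. q < nstates M \<longrightarrow> length syms = ntapes M \<longrightarrow> (\<forall>s\<in>set syms. s < nsyms M) \<longrightarrow>
        (case delta M q syms of (q', w, m) \<Rightarrow>
           q' < nstates M \<and> length w = ntapes M \<and> (\<forall>s\<in>set w. s < nsyms M) \<and>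
           length m = ntapes M \<and> (\<forall>d\<in>set m. d \<in> {-1, 0, 1})))"

type_synonym tape = "int \<Rightarrow> nat"
text \<open>configuration: state, tape contents, head positions\<close>
type_synonym config = "nat \<times> tape list \<times> int list"

definition str_tape :: "str \<Rightarrow> tape" where
  "str_tape s = (\<lambda>i. if 0 \<le> i \<and> i < int (length s) then (if s ! nat i then 2 else 1) else 0)"

definition read_str :: "tape \<Rightarrow> str" where
  "read_str t = (let n = (LEAST n. t (int n) \<notin> {1, 2}) in map (\<lambda>i. t (int i) = 2) [0..<n])"

definition init_config :: "otm \<Rightarrow> str \<Rightarrow> config" where
  "init_config M a = (qstart M, str_tape a # replicate (ntapes M - 1) (\<lambda>_. 0),
                      replicate (ntapes M) 0)"

definition step :: "otm \<Rightarrow> strfun \<Rightarrow> config \<Rightarrow> config" where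
  "step M \<phi> c = (case c of (q, ts, hs) \<Rightarrow>
     if q = qhalt M then c
     else if q = qquery M then
       (qanswer M, ts[1 := str_tape (\<phi> (read_str (ts ! 1)))], hs[1 := 0])
     else
       (let syms = map (\<lambda>i. (ts ! i) (hs ! i)) [0..<ntapes M] in
        case delta M q syms of (q', w, m) \<Rightarrow>
          (q', map (\<lambda>i. (ts ! i)((hs ! i) := w ! i)) [0..<ntapes M],
               map (\<lambda>i. hs ! i + m ! i) [0..<ntapes M])))"

definition run :: "otm \<Rightarrow> strfun \<Rightarrow> str \<Rightarrow> nat \<Rightarrow> config" where
  "run M \<phi> a t = (step M \<phi> ^^ t) (init_config M a)"

definition halts_with :: "otm \<Rightarrow> strfun \<Rightarrow> str \<Rightarrow> nat \<Rightarrow> str \<Rightarrow> bool" where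
  "halts_with M \<phi> a t y \<longleftrightarrow>
     (case run M \<phi> a t of (q, ts, hs) \<Rightarrow> q = qhalt M \<and> read_str (ts ! 2) = y)"

definition poly_time_functional :: "(strfun \<Rightarrow> strfun) \<Rightarrow> bool" where
  "poly_time_functional F \<longleftrightarrow>
     (\<exists>M P. wf_otm M \<and> second_order_poly P \<and>
        (\<forall>\<phi> a. \<exists>t \<le> P (sizefun \<phi>) (length a). halts_with M \<phi> a t (F \<phi> a)))"

end

theory Submission
  imports Defs
begin

definition blank :: tape where "blank = (\<lambda>_. 0)"
definition un :: "nat \<Rightarrow> tape" where "un m = str_tape (replicate m False)"
definition nomove :: "nat \<Rightarrow> int" where "nomove = (\<lambda>_. 0)"

definition tr :: "nat \<Rightarrow> (nat \<Rightarrow> nat) \<Rightarrow> nat \<times> (nat \<Rightarrow> nat) \<times> (nat \<Rightarrow> int)" where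
 "tr q S =
   (if q = 1 then (if S 4 \<noteq> 0 then (1, S(1:=1), nomove(1:=1, 4:=1)) else (2, S(1:=0), nomove))
    else if q = 3 then (if S 2 \<noteq> 0 then (10, S, nomove(2:=1))
                       else if S 1 = 1 \<or> S 1 = 2 then (3, S(3:=1), nomove(1:=1, 3:=1))
                       else (4, S, nomove(1:=-1, 3:=-1)))
    else if q = 4 then (if S 1 \<noteq> 0 then (4, S, nomove(1:=-1)) else (5, S, nomove(1:=1)))
    else if q = 5 then (if S 3 \<noteq> 0 then (5, S, nomove(3:=-1)) else (6, S, nomove(3:=1)))
    else if q = 6 then (if S 0 = 0 then (8, S, nomove(0:=-1, 2:=-1)) else (7, S(4:=1), nomove(0:=1, 4:=-1)))
    else if q = 7 then (if S 4 \<noteq> 0 then (7, S, nomove(4:=-1)) else (1, S, nomove(4:=1)))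
    else if q = 8 then (if S 0 \<noteq> 0 then (8, S, nomove(0:=-1)) else (9, S, nomove(0:=1)))
    else if q = 9 then (if S 0 \<noteq> 0 then (9, S(1:=S 0), nomove(0:=1, 1:=1)) else (2, S(1:=0, 2:=1), nomove))
    else if q = 10 then (if S 3 \<noteq> 0 then (10, S(2:= (if S 1 = 2 then 2 else 1)), nomove(1:=1, 2:=1, 3:=1))
                        else (11, S, nomove))
    else (q, S, nomove))"

definition mdelta :: "nat \<Rightarrow> nat list \<Rightarrow> nat \<times> nat list \<times> int list" where
  "mdelta q syms = (case tr q (\<lambda>i. if i < 5 then syms ! i else 0) of (q', W, Mv) \<Rightarrow>
      (q', map W [0..<5], map Mv [0..<5]))"

definition Mach :: otm where
  "Mach = \<lparr>ntapes = 5, nstates = 12, nsyms = 3, delta = mdelta, qstart = 1, qhalt = 11,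
           qquery = 2, qanswer = 3\<rparr>"

definition cfg :: "nat \<Rightarrow> (nat \<Rightarrow> tape) \<Rightarrow> (nat \<Rightarrow> int) \<Rightarrow> config" where
  "cfg q T H = (q, map T [0..<5], map H [0..<5])"

lemma upt5: "[0..<5] = [0,1,2,3,4::nat]" by (simp add: upt_rec)

lemma cfg_cong: "(\<And>i. i < 5 \<Longrightarrow> T i = T' i) \<Longrightarrow> (\<And>i. i < 5 \<Longrightarrow> H i = H' i) \<Longrightarrow> cfg q T H = cfg q T' H'"
  unfolding cfg_def upt5 by simp

lemma step_normal:
  assumes "q \<noteq> 11" "q \<noteq> 2"
  shows "step Mach \<phi> (cfg q T H) = (case tr q (\<lambda>i. if i<5 then T i (H i) else 0) of (q', W, Mv) \<Rightarrow>
          cfg q' (\<lambda>i. (T i)(H i := W i)) (\<lambda>i. H i + Mv i))"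
proof -
  have e: "(\<lambda>i. if i < 5 then map (\<lambda>i. (map T [0..<5] ! i) (map H [0..<5] ! i)) [0..<5] ! i else 0)
     = (\<lambda>i. if i<5 then T i (H i) else 0)" by (rule ext) simp
  show ?thesis using assms
    unfolding step_def Mach_def mdelta_def cfg_def
    by (simp add: e split: prod.splits)
qed

lemma step_query: "step Mach \<phi> (cfg 2 T H) = cfg 3 (T(1 := str_tape (\<phi> (read_str (T 1))))) (H(1 := 0))"
  unfolding step_def Mach_def cfg_def by (simp add: upt5)

lemma step_halt: "step Mach \<phi> (cfg 11 T H) = cfg 11 T H"
  unfolding step_def Mach_def cfg_def by simp

lemma less5: "i < (5::nat) \<longleftrightarrow> i = 0 \<or> i = 1 \<or> i = 2 \<or> i = 3 \<or> i = 4" by auto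



lemma s1a: "T 4 (H 4) \<noteq> 0 \<Longrightarrow> step Mach \<phi> (cfg 1 T H) = cfg 1 (T(1 := (T 1)(H 1 := 1))) (H(1 := H 1 + 1, 4 := H 4 + 1))"
  by (simp add: step_normal tr_def, rule cfg_cong, auto simp: nomove_def less5)
lemma s1b: "T 4 (H 4) = 0 \<Longrightarrow> step Mach \<phi> (cfg 1 T H) = cfg 2 (T(1 := (T 1)(H 1 := 0))) H"
  by (simp add: step_normal tr_def, rule cfg_cong, auto simp: nomove_def less5)
lemma s3a: "T 2 (H 2) \<noteq> 0 \<Longrightarrow> step Mach \<phi> (cfg 3 T H) = cfg 10 T (H(2 := H 2 + 1))"
  by (simp add: step_normal tr_def, rule cfg_cong, auto simp: nomove_def less5)
lemma s3b: "T 2 (H 2) = 0 \<Longrightarrow> T 1 (H 1) = 1 \<or> T 1 (H 1) = 2 \<Longrightarrow> step Mach \<phi> (cfg 3 T H) = cfg 3 (T(3 := (T 3)(H 3 := 1))) (H(1 := H 1 + 1, 3 := H 3 + 1))"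
  by (simp add: step_normal tr_def, rule cfg_cong, auto simp: nomove_def less5)
lemma s3c: "T 2 (H 2) = 0 \<Longrightarrow> T 1 (H 1) \<noteq> 1 \<Longrightarrow> T 1 (H 1) \<noteq> 2 \<Longrightarrow> step Mach \<phi> (cfg 3 T H) = cfg 4 T (H(1 := H 1 - 1, 3 := H 3 - 1))"
  by (simp add: step_normal tr_def, rule cfg_cong, auto simp: nomove_def less5)
lemma s4a: "T 1 (H 1) \<noteq> 0 \<Longrightarrow> step Mach \<phi> (cfg 4 T H) = cfg 4 T (H(1 := H 1 - 1))"
  by (simp add: step_normal tr_def, rule cfg_cong, auto simp: nomove_def less5)
lemma s4b: "T 1 (H 1) = 0 \<Longrightarrow> step Mach \<phi> (cfg 4 T H) = cfg 5 T (H(1 := H 1 + 1))"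
  by (simp add: step_normal tr_def, rule cfg_cong, auto simp: nomove_def less5)
lemma s5a: "T 3 (H 3) \<noteq> 0 \<Longrightarrow> step Mach \<phi> (cfg 5 T H) = cfg 5 T (H(3 := H 3 - 1))"
  by (simp add: step_normal tr_def, rule cfg_cong, auto simp: nomove_def less5)
lemma s5b: "T 3 (H 3) = 0 \<Longrightarrow> step Mach \<phi> (cfg 5 T H) = cfg 6 T (H(3 := H 3 + 1))"
  by (simp add: step_normal tr_def, rule cfg_cong, auto simp: nomove_def less5)
lemma s6a: "T 0 (H 0) = 0 \<Longrightarrow> step Mach \<phi> (cfg 6 T H) = cfg 8 T (H(0 := H 0 - 1, 2 := H 2 - 1))"
  by (simp add: step_normal tr_def, rule cfg_cong, auto simp: nomove_def less5)
lemma s6b: "T 0 (H 0) \<noteq> 0 \<Longrightarrow> step Mach \<phi> (cfg 6 T H) = cfg 7 (T(4 := (T 4)(H 4 := 1))) (H(0 := H 0 + 1, 4 := H 4 - 1))"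
  by (simp add: step_normal tr_def, rule cfg_cong, auto simp: nomove_def less5)
lemma s7a: "T 4 (H 4) \<noteq> 0 \<Longrightarrow> step Mach \<phi> (cfg 7 T H) = cfg 7 T (H(4 := H 4 - 1))"
  by (simp add: step_normal tr_def, rule cfg_cong, auto simp: nomove_def less5)
lemma s7b: "T 4 (H 4) = 0 \<Longrightarrow> step Mach \<phi> (cfg 7 T H) = cfg 1 T (H(4 := H 4 + 1))"
  by (simp add: step_normal tr_def, rule cfg_cong, auto simp: nomove_def less5)
lemma s8a: "T 0 (H 0) \<noteq> 0 \<Longrightarrow> step Mach \<phi> (cfg 8 T H) = cfg 8 T (H(0 := H 0 - 1))"
  by (simp add: step_normal tr_def, rule cfg_cong, auto simp: nomove_def less5)
lemma s8b: "T 0 (H 0) = 0 \<Longrightarrow> step Mach \<phi> (cfg 8 T H) = cfg 9 T (H(0 := H 0 + 1))"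
  by (simp add: step_normal tr_def, rule cfg_cong, auto simp: nomove_def less5)
lemma s9a: "T 0 (H 0) \<noteq> 0 \<Longrightarrow> step Mach \<phi> (cfg 9 T H) = cfg 9 (T(1 := (T 1)(H 1 := T 0 (H 0)))) (H(0 := H 0 + 1, 1 := H 1 + 1))"
  by (simp add: step_normal tr_def, rule cfg_cong, auto simp: nomove_def less5)
lemma s9b: "T 0 (H 0) = 0 \<Longrightarrow> step Mach \<phi> (cfg 9 T H) = cfg 2 (T(1 := (T 1)(H 1 := 0), 2 := (T 2)(H 2 := 1))) H"
  by (simp add: step_normal tr_def, rule cfg_cong, auto simp: nomove_def less5)
lemma s10a: "T 3 (H 3) \<noteq> 0 \<Longrightarrow> step Mach \<phi> (cfg 10 T H) = cfg 10 (T(2 := (T 2)(H 2 := (if T 1 (H 1) = 2 then 2 else 1)))) (H(1 := H 1 + 1, 2 := H 2 + 1, 3 := H 3 + 1))"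
  by (cases "T 1 (H 1) = 2"; (simp add: step_normal tr_def, rule cfg_cong, auto simp: nomove_def less5))
lemma s10b: "T 3 (H 3) = 0 \<Longrightarrow> step Mach \<phi> (cfg 10 T H) = cfg 11 T H"
  by (simp add: step_normal tr_def, rule cfg_cong, auto simp: nomove_def less5)

definition ss :: "strfun \<Rightarrow> nat \<Rightarrow> config \<Rightarrow> config" where
  "ss \<phi> j c = (step Mach \<phi> ^^ j) c"

lemma ss_add: "ss \<phi> (a + b) c = ss \<phi> b (ss \<phi> a c)"
  unfolding ss_def by (metis funpow_add add.commute comp_apply)
lemma ss_Suc: "ss \<phi> (Suc j) c = ss \<phi> j (step Mach \<phi> c)"
  unfolding ss_def by (simp only: funpow_Suc_right comp_apply)
lemma ss_0: "ss \<phi> 0 c = c" unfolding ss_def by simp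
lemma ss_1: "ss \<phi> 1 c = step Mach \<phi> c" unfolding ss_def by simp

lemma ret_gen:
  assumes A: "\<And>T H. T i (H i) \<noteq> 0 \<Longrightarrow> step Mach \<phi> (cfg Q T H) = cfg Q T (H(i := H i - 1))"
      and B: "\<And>T H. T i (H i) = 0 \<Longrightarrow> step Mach \<phi> (cfg Q T H) = cfg Q' T (H(i := H i + 1))"
  shows "T i (-1) = 0 \<Longrightarrow> (\<forall>x. 0 \<le> x \<and> x < int p \<longrightarrow> T i x \<noteq> 0) \<Longrightarrow> H i = int p - 1 \<Longrightarrow>
         ss \<phi> (p + 1) (cfg Q T H) = cfg Q' T (H(i := 0))"
proof (induction p arbitrary: H)
  case 0
  have "T i (H i) = 0" using 0 by simp
  hence "step Mach \<phi> (cfg Q T H) = cfg Q' T (H(i := H i + 1))" by (rule B)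
  moreover have "H(i := H i + 1) = H(i := 0)" using 0 by simp
  ultimately show ?case by (simp only: ss_1 add_0_left)
next
  case (Suc p)
  have "T i (H i) \<noteq> 0" using Suc.prems by auto
  hence "step Mach \<phi> (cfg Q T H) = cfg Q T (H(i := H i - 1))" by (rule A)
  moreover have "ss \<phi> (p + 1) (cfg Q T (H(i := H i - 1))) = cfg Q' T (H(i := H i - 1, i := 0))"
    using Suc.prems by (intro Suc.IH) auto
  ultimately show ?case by (simp only: add_Suc ss_Suc fun_upd_upd)
qed

lemmas ret4 = ret_gen[OF s4a s4b]
lemmas ret5 = ret_gen[OF s5a s5b]
lemmas ret7 = ret_gen[OF s7a s7b]
lemmas ret8 = ret_gen[OF s8a s8b]

lemma read_str_eq:
  assumes "\<And>j. j < m \<Longrightarrow> t (int j) = 1 \<or> t (int j) = 2" "t (int m) \<noteq> 1" "t (int m) \<noteq> 2"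
  shows "read_str t = map (\<lambda>j. t (int j) = 2) [0..<m]"
proof -
  have "(LEAST n. t (int n) \<notin> {1,2}) = m"
  proof (rule Least_equality)
    show "t (int m) \<notin> {1, 2}" using assms by auto
    fix y assume "t (int y) \<notin> {1, 2}" thus "m \<le> y" using assms(1)[of y] by (cases "y < m") auto
  qed
  thus ?thesis unfolding read_str_def Let_def by simp
qed

lemma un_simp: "un k x = (if 0 \<le> x \<and> x < int k then 1 else 0)"
  unfolding un_def str_tape_def by auto

lemma str_tape_nz: "0 \<le> x \<Longrightarrow> x < int (length b) \<Longrightarrow> str_tape b x = 1 \<or> str_tape b x = 2"
  unfolding str_tape_def by auto
lemma str_tape_out: "\<not> (0 \<le> x \<and> x < int (length b)) \<Longrightarrow> str_tape b x = 0"
  unfolding str_tape_def by auto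

lemma copy1: "T 4 = un k \<Longrightarrow> H 1 = int j \<Longrightarrow> H 4 = int j \<Longrightarrow> j \<le> k \<Longrightarrow>
  ss \<phi> (k - j + 1) (cfg 1 T H) =
  cfg 2 (T(1 := (\<lambda>x. if int j \<le> x \<and> x < int k then 1 else if x = int k then 0 else T 1 x))) (H(1 := int k, 4 := int k))"
proof (induction "k - j" arbitrary: j T H)
  case 0
  hence jk: "j = k" by simp
  have "step Mach \<phi> (cfg 1 T H) = cfg 2 (T(1 := (T 1)(H 1 := 0))) H"
    by (rule s1b) (use 0 jk in \<open>simp add: un_simp\<close>)
  moreover have "T(1 := (T 1)(H 1 := 0)) = T(1 := (\<lambda>x. if int j \<le> x \<and> x < int k then 1 else if x = int k then 0 else T 1 x))"
    using 0 jk by (auto simp: fun_eq_iff)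
  moreover have "H = H(1 := int k, 4 := int k)" using 0 jk by (auto simp: fun_eq_iff)
  moreover have "k - j + 1 = 1" using jk by simp
  ultimately show ?case by (simp only: ss_1)
next
  case (Suc d)
  hence jk: "j < k" by simp
  have "step Mach \<phi> (cfg 1 T H) = cfg 1 (T(1 := (T 1)(H 1 := 1))) (H(1 := H 1 + 1, 4 := H 4 + 1))"
    by (rule s1a) (use Suc jk in \<open>simp add: un_simp\<close>)
  moreover have "ss \<phi> (k - Suc j + 1) (cfg 1 (T(1 := (T 1)(H 1 := 1))) (H(1 := H 1 + 1, 4 := H 4 + 1))) =
     cfg 2 ((T(1 := (T 1)(H 1 := 1)))(1 := (\<lambda>x. if int (Suc j) \<le> x \<and> x < int k then 1 else if x = int k then 0 else (T(1 := (T 1)(H 1 := 1))) 1 x)))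
       ((H(1 := H 1 + 1, 4 := H 4 + 1))(1 := int k, 4 := int k))"
    using Suc jk by (intro Suc.hyps) auto
  moreover have "k - j + 1 = Suc (k - Suc j + 1)" using jk by simp
  moreover have "(T(1 := (T 1)(H 1 := 1)))(1 := (\<lambda>x. if int (Suc j) \<le> x \<and> x < int k then 1 else if x = int k then 0 else (T(1 := (T 1)(H 1 := 1))) 1 x))
     = T(1 := (\<lambda>x. if int j \<le> x \<and> x < int k then 1 else if x = int k then 0 else T 1 x))"
    using Suc jk by (auto simp: fun_eq_iff)
  moreover have "(H(1 := H 1 + 1, 4 := H 4 + 1))(1 := int k, 4 := int k) = H(1 := int k, 4 := int k)"
    by (auto simp: fun_eq_iff)
  ultimately show ?case by (simp only: ss_Suc)
qed

lemma upd3: "T 2 (H 2) = 0 \<Longrightarrow> T 1 = str_tape b \<Longrightarrow> H 1 = int j \<Longrightarrow> H 3 = int j \<Longrightarrow> j \<le> length b \<Longrightarrow>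
  ss \<phi> (length b - j + 1) (cfg 3 T H) =
  cfg 4 (T(3 := (\<lambda>x. if int j \<le> x \<and> x < int (length b) then 1 else T 3 x)))
        (H(1 := int (length b) - 1, 3 := int (length b) - 1))"
proof (induction "length b - j" arbitrary: j T H)
  case 0
  hence jk: "j = length b" by simp
  have "step Mach \<phi> (cfg 3 T H) = cfg 4 T (H(1 := H 1 - 1, 3 := H 3 - 1))"
    by (rule s3c) (use 0 jk in \<open>simp_all add: str_tape_def\<close>)
  moreover have "T = T(3 := (\<lambda>x. if int j \<le> x \<and> x < int (length b) then 1 else T 3 x))"
    using 0 jk by (auto simp: fun_eq_iff)
  moreover have "H(1 := H 1 - 1, 3 := H 3 - 1) = H(1 := int (length b) - 1, 3 := int (length b) - 1)"
    using 0 jk by (auto simp: fun_eq_iff)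
  moreover have "length b - j + 1 = 1" using jk by simp
  ultimately show ?case by (simp only: ss_1)
next
  case (Suc d)
  hence jk: "j < length b" by simp
  have "step Mach \<phi> (cfg 3 T H) = cfg 3 (T(3 := (T 3)(H 3 := 1))) (H(1 := H 1 + 1, 3 := H 3 + 1))"
    by (rule s3b) (use Suc jk str_tape_nz[of "int j" b] in auto)
  moreover have "ss \<phi> (length b - Suc j + 1) (cfg 3 (T(3 := (T 3)(H 3 := 1))) (H(1 := H 1 + 1, 3 := H 3 + 1))) =
     cfg 4 ((T(3 := (T 3)(H 3 := 1)))(3 := (\<lambda>x. if int (Suc j) \<le> x \<and> x < int (length b) then 1 else (T(3 := (T 3)(H 3 := 1))) 3 x)))
       ((H(1 := H 1 + 1, 3 := H 3 + 1))(1 := int (length b) - 1, 3 := int (length b) - 1))"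
    using Suc jk by (intro Suc.hyps) auto
  moreover have "length b - j + 1 = Suc (length b - Suc j + 1)" using jk by simp
  moreover have "(T(3 := (T 3)(H 3 := 1)))(3 := (\<lambda>x. if int (Suc j) \<le> x \<and> x < int (length b) then 1 else (T(3 := (T 3)(H 3 := 1))) 3 x))
     = T(3 := (\<lambda>x. if int j \<le> x \<and> x < int (length b) then 1 else T 3 x))"
    using Suc jk by (auto simp: fun_eq_iff)
  moreover have "(H(1 := H 1 + 1, 3 := H 3 + 1))(1 := int (length b) - 1, 3 := int (length b) - 1) = H(1 := int (length b) - 1, 3 := int (length b) - 1)"
    by (auto simp: fun_eq_iff)
  ultimately show ?case by (simp only: ss_Suc)
qed

lemma copy9: "T 0 = str_tape a \<Longrightarrow> H 0 = int j \<Longrightarrow> H 1 = int j \<Longrightarrow> j \<le> length a \<Longrightarrow>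
  ss \<phi> (length a - j + 1) (cfg 9 T H) =
  cfg 2 (T(1 := (\<lambda>x. if int j \<le> x \<and> x < int (length a) then T 0 x else if x = int (length a) then 0 else T 1 x),
           2 := (T 2)(H 2 := 1)))
        (H(0 := int (length a), 1 := int (length a)))"
proof (induction "length a - j" arbitrary: j T H)
  case 0
  hence jk: "j = length a" by simp
  have "step Mach \<phi> (cfg 9 T H) = cfg 2 (T(1 := (T 1)(H 1 := 0), 2 := (T 2)(H 2 := 1))) H"
    by (rule s9b) (use 0 jk in \<open>simp add: str_tape_def\<close>)
  moreover have "T(1 := (T 1)(H 1 := 0), 2 := (T 2)(H 2 := 1)) = T(1 := (\<lambda>x. if int j \<le> x \<and> x < int (length a) then T 0 x else if x = int (length a) then 0 else T 1 x),
           2 := (T 2)(H 2 := 1))"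
    using 0 jk by (auto simp: fun_eq_iff)
  moreover have "H = H(0 := int (length a), 1 := int (length a))" using 0 jk by (auto simp: fun_eq_iff)
  moreover have "length a - j + 1 = 1" using jk by simp
  ultimately show ?case by (simp only: ss_1)
next
  case (Suc d)
  hence jk: "j < length a" by simp
  have "step Mach \<phi> (cfg 9 T H) = cfg 9 (T(1 := (T 1)(H 1 := T 0 (H 0)))) (H(0 := H 0 + 1, 1 := H 1 + 1))"
    by (rule s9a) (use Suc jk str_tape_nz[of "int j" a] in auto)
  moreover have "ss \<phi> (length a - Suc j + 1) (cfg 9 (T(1 := (T 1)(H 1 := T 0 (H 0)))) (H(0 := H 0 + 1, 1 := H 1 + 1))) =
     cfg 2 ((T(1 := (T 1)(H 1 := T 0 (H 0))))(1 := (\<lambda>x. if int (Suc j) \<le> x \<and> x < int (length a) then (T(1 := (T 1)(H 1 := T 0 (H 0)))) 0 x else if x = int (length a) then 0 else (T(1 := (T 1)(H 1 := T 0 (H 0)))) 1 x),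
           2 := ((T(1 := (T 1)(H 1 := T 0 (H 0)))) 2)((H(0 := H 0 + 1, 1 := H 1 + 1)) 2 := 1)))
       ((H(0 := H 0 + 1, 1 := H 1 + 1))(0 := int (length a), 1 := int (length a)))"
    using Suc jk by (intro Suc.hyps) auto
  moreover have "length a - j + 1 = Suc (length a - Suc j + 1)" using jk by simp
  moreover have "(T(1 := (T 1)(H 1 := T 0 (H 0))))(1 := (\<lambda>x. if int (Suc j) \<le> x \<and> x < int (length a) then (T(1 := (T 1)(H 1 := T 0 (H 0)))) 0 x else if x = int (length a) then 0 else (T(1 := (T 1)(H 1 := T 0 (H 0)))) 1 x),
           2 := ((T(1 := (T 1)(H 1 := T 0 (H 0)))) 2)((H(0 := H 0 + 1, 1 := H 1 + 1)) 2 := 1))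
     = T(1 := (\<lambda>x. if int j \<le> x \<and> x < int (length a) then T 0 x else if x = int (length a) then 0 else T 1 x),
           2 := (T 2)(H 2 := 1))"
    using Suc jk by (auto simp: fun_eq_iff)
  moreover have "(H(0 := H 0 + 1, 1 := H 1 + 1))(0 := int (length a), 1 := int (length a)) = H(0 := int (length a), 1 := int (length a))"
    by (auto simp: fun_eq_iff)
  ultimately show ?case by (simp only: ss_Suc)
qed

lemma out10: "T 3 = un f \<Longrightarrow> H 1 = int j \<Longrightarrow> H 2 = int j \<Longrightarrow> H 3 = int j \<Longrightarrow> j \<le> f \<Longrightarrow>
  ss \<phi> (f - j + 1) (cfg 10 T H) =
  cfg 11 (T(2 := (\<lambda>x. if int j \<le> x \<and> x < int f then (if T 1 x = 2 then 2 else 1) else T 2 x)))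
        (H(1 := int f, 2 := int f, 3 := int f))"
proof (induction "f - j" arbitrary: j T H)
  case 0
  hence jk: "j = f" by simp
  have "step Mach \<phi> (cfg 10 T H) = cfg 11 T H"
    by (rule s10b) (use 0 jk in \<open>simp add: un_simp\<close>)
  moreover have "T = T(2 := (\<lambda>x. if int j \<le> x \<and> x < int f then (if T 1 x = 2 then 2 else 1) else T 2 x))"
    using 0 jk by (auto simp: fun_eq_iff)
  moreover have "H = H(1 := int f, 2 := int f, 3 := int f)" using 0 jk by (auto simp: fun_eq_iff)
  moreover have "f - j + 1 = 1" using jk by simp
  ultimately show ?case by (simp only: ss_1)
next
  case (Suc d)
  hence jk: "j < f" by simp
  have "step Mach \<phi> (cfg 10 T H) = cfg 10 (T(2 := (T 2)(H 2 := (if T 1 (H 1) = 2 then 2 else 1)))) (H(1 := H 1 + 1, 2 := H 2 + 1, 3 := H 3 + 1))"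
    by (rule s10a) (use Suc jk in \<open>simp add: un_simp\<close>)
  moreover have "ss \<phi> (f - Suc j + 1) (cfg 10 (T(2 := (T 2)(H 2 := (if T 1 (H 1) = 2 then 2 else 1)))) (H(1 := H 1 + 1, 2 := H 2 + 1, 3 := H 3 + 1))) =
     cfg 11 ((T(2 := (T 2)(H 2 := (if T 1 (H 1) = 2 then 2 else 1))))(2 := (\<lambda>x. if int (Suc j) \<le> x \<and> x < int f then (if (T(2 := (T 2)(H 2 := (if T 1 (H 1) = 2 then 2 else 1)))) 1 x = 2 then 2 else 1) else (T(2 := (T 2)(H 2 := (if T 1 (H 1) = 2 then 2 else 1)))) 2 x)))
       ((H(1 := H 1 + 1, 2 := H 2 + 1, 3 := H 3 + 1))(1 := int f, 2 := int f, 3 := int f))"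
    using Suc jk by (intro Suc.hyps) auto
  moreover have "f - j + 1 = Suc (f - Suc j + 1)" using jk by simp
  moreover have "(T(2 := (T 2)(H 2 := (if T 1 (H 1) = 2 then 2 else 1))))(2 := (\<lambda>x. if int (Suc j) \<le> x \<and> x < int f then (if (T(2 := (T 2)(H 2 := (if T 1 (H 1) = 2 then 2 else 1)))) 1 x = 2 then 2 else 1) else (T(2 := (T 2)(H 2 := (if T 1 (H 1) = 2 then 2 else 1)))) 2 x))
     = T(2 := (\<lambda>x. if int j \<le> x \<and> x < int f then (if T 1 x = 2 then 2 else 1) else T 2 x))"
    using Suc jk by (auto simp: fun_eq_iff)
  moreover have "(H(1 := H 1 + 1, 2 := H 2 + 1, 3 := H 3 + 1))(1 := int f, 2 := int f, 3 := int f) = H(1 := int f, 2 := int f, 3 := int f)"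
    by (auto simp: fun_eq_iff)
  ultimately show ?case by (simp only: ss_Suc)
qed

lemma copy1_0: "T 4 = un k \<Longrightarrow> H 1 = 0 \<Longrightarrow> H 4 = 0 \<Longrightarrow>
  ss \<phi> (k + 1) (cfg 1 T H) =
  cfg 2 (T(1 := (\<lambda>x. if 0 \<le> x \<and> x < int k then 1 else if x = int k then 0 else T 1 x))) (H(1 := int k, 4 := int k))"
  using copy1[of T k H 0 \<phi>] by simp

lemma upd3_0: "T 2 (H 2) = 0 \<Longrightarrow> T 1 = str_tape b \<Longrightarrow> H 1 = 0 \<Longrightarrow> H 3 = 0 \<Longrightarrow>
  ss \<phi> (length b + 1) (cfg 3 T H) =
  cfg 4 (T(3 := (\<lambda>x. if 0 \<le> x \<and> x < int (length b) then 1 else T 3 x)))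
        (H(1 := int (length b) - 1, 3 := int (length b) - 1))"
  using upd3[of T H b 0 \<phi>] by simp

lemma copy9_0: "T 0 = str_tape a \<Longrightarrow> H 0 = 0 \<Longrightarrow> H 1 = 0 \<Longrightarrow>
  ss \<phi> (length a + 1) (cfg 9 T H) =
  cfg 2 (T(1 := (\<lambda>x. if 0 \<le> x \<and> x < int (length a) then T 0 x else if x = int (length a) then 0 else T 1 x),
           2 := (T 2)(H 2 := 1)))
        (H(0 := int (length a), 1 := int (length a)))"
  using copy9[of T a H 0 \<phi>] by simp

lemma out10_0: "T 3 = un f \<Longrightarrow> H 1 = 0 \<Longrightarrow> H 2 = 0 \<Longrightarrow> H 3 = 0 \<Longrightarrow>
  ss \<phi> (f + 1) (cfg 10 T H) =
  cfg 11 (T(2 := (\<lambda>x. if 0 \<le> x \<and> x < int f then (if T 1 x = 2 then 2 else 1) else T 2 x)))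
        (H(1 := int f, 2 := int f, 3 := int f))"
  using out10[of T f H 0 \<phi>] by simp

definition loopT :: "str \<Rightarrow> tape \<Rightarrow> nat \<Rightarrow> nat \<Rightarrow> nat \<Rightarrow> tape" where
  "loopT a Q m k = (\<lambda>_. blank)(0 := str_tape a, 1 := Q, 3 := un m, 4 := un k)"
definition loopH :: "nat \<Rightarrow> nat \<Rightarrow> int" where
  "loopH k = (\<lambda>_. 0)(0 := int k)"

lemma phaseA:
  fixes \<phi> a Q m k
  defines "b \<equiv> \<phi> (replicate k False)"
  shows "ss \<phi> ((((k + 1) + 1) + (length b + 1)) + (length b + 1) + (length b + 1)) (cfg 1 (loopT a Q m k) (loopH k))
       = cfg 6 (loopT a (str_tape b) (max m (length b)) k) ((loopH k)(4 := int k))"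
proof -
  define L where "L = length b"
  define T0 where "T0 = loopT a Q m k"
  define H0 where "H0 = loopH k"
  define Qk where "Qk = (\<lambda>x. if 0 \<le> x \<and> x < int k then 1 else if x = int k then (0::nat) else T0 1 x)"
  define T1 where "T1 = T0(1 := Qk)"
  define H1 where "H1 = H0(1 := int k, 4 := int k)"
  have e1: "ss \<phi> (k + 1) (cfg 1 T0 H0) = cfg 2 T1 H1"
    unfolding T1_def H1_def Qk_def by (rule copy1_0) (simp_all add: T0_def H0_def loopT_def loopH_def)
  have rs: "read_str (T1 1) = replicate k False"
  proof -
    have "read_str (T1 1) = map (\<lambda>j. T1 1 (int j) = 2) [0..<k]"
      by (rule read_str_eq) (simp_all add: T1_def Qk_def)
    also have "\<dots> = replicate k False" by (rule nth_equalityI) (auto simp: T1_def Qk_def)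
    finally show ?thesis .
  qed
  define T2 where "T2 = T1(1 := str_tape b)"
  define H2 where "H2 = H1(1 := 0)"
  have e2: "step Mach \<phi> (cfg 2 T1 H1) = cfg 3 T2 H2"
    unfolding T2_def H2_def b_def by (simp only: step_query rs)
  define T3 where "T3 = T2(3 := (\<lambda>x. if 0 \<le> x \<and> x < int L then 1 else T2 3 x))"
  define H3 where "H3 = H2(1 := int L - 1, 3 := int L - 1)"
  have e3: "ss \<phi> (L + 1) (cfg 3 T2 H2) = cfg 4 T3 H3"
    unfolding T3_def H3_def L_def by (rule upd3_0) (simp_all add: T2_def H2_def T1_def H1_def T0_def H0_def loopT_def loopH_def blank_def)
  have T31: "T3 1 = str_tape b" by (simp add: T3_def T2_def)
  have T33: "T3 3 = un (max m L)"
    by (auto simp: T3_def T2_def T1_def T0_def loopT_def un_simp fun_eq_iff)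
  have e4: "ss \<phi> (L + 1) (cfg 4 T3 H3) = cfg 5 T3 (H3(1 := 0))"
    by (rule ret4) (auto simp: T3_def T2_def H3_def H2_def L_def str_tape_def)
  have e5: "ss \<phi> (L + 1) (cfg 5 T3 (H3(1 := 0))) = cfg 6 T3 (H3(1 := 0, 3 := 0))"
    by (rule ret5) (auto simp: T33 H3_def H2_def un_simp)
  have fin: "cfg 6 T3 (H3(1 := 0, 3 := 0)) = cfg 6 (loopT a (str_tape b) (max m (length b)) k) ((loopH k)(4 := int k))"
    by (rule cfg_cong) (auto simp: less5 T33 T31 L_def H3_def H2_def H1_def H0_def loopH_def,
       auto simp: T3_def T2_def T1_def T0_def loopT_def)
  have "ss \<phi> ((((k + 1) + 1) + (L + 1)) + (L + 1) + (L + 1)) (cfg 1 T0 H0)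
     = ss \<phi> (L + 1) (ss \<phi> (L + 1) (ss \<phi> (L + 1) (ss \<phi> 1 (ss \<phi> (k + 1) (cfg 1 T0 H0)))))"
    by (simp only: ss_add)
  also have "\<dots> = cfg 6 T3 (H3(1 := 0, 3 := 0))"
    by (simp only: e1 ss_1 e2 e3 e4 e5)
  finally show ?thesis using fin by (simp only: T0_def H0_def L_def)
qed

lemma phaseB:
  assumes "k < length a"
  shows "ss \<phi> (1 + (k + 1)) (cfg 6 (loopT a Q m k) ((loopH k)(4 := int k)))
       = cfg 1 (loopT a Q m (k + 1)) (loopH (k + 1))"
proof -
  define T0 where "T0 = loopT a Q m k"
  define H0 where "H0 = (loopH k)(4 := int k)"
  define T1 where "T1 = T0(4 := (T0 4)(H0 4 := 1))"
  define H1 where "H1 = H0(0 := H0 0 + 1, 4 := H0 4 - 1)"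
  have e1: "step Mach \<phi> (cfg 6 T0 H0) = cfg 7 T1 H1"
    unfolding T1_def H1_def by (rule s6b) (use assms in \<open>simp add: T0_def H0_def loopT_def loopH_def str_tape_def\<close>)
  have T14: "T1 4 = un (k + 1)" by (auto simp: T1_def T0_def H0_def loopT_def un_simp fun_eq_iff)
  have e2: "ss \<phi> (k + 1) (cfg 7 T1 H1) = cfg 1 T1 (H1(4 := 0))"
    by (rule ret7) (auto simp: T14 H1_def H0_def un_simp)
  have fin: "cfg 1 T1 (H1(4 := 0)) = cfg 1 (loopT a Q m (k + 1)) (loopH (k + 1))"
    by (rule cfg_cong) (auto simp: less5 T14 H1_def H0_def loopH_def,
       auto simp: T1_def T0_def loopT_def)
  have "ss \<phi> (1 + (k + 1)) (cfg 6 T0 H0) = ss \<phi> (k + 1) (ss \<phi> 1 (cfg 6 T0 H0))"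
    by (simp only: ss_add)
  also have "\<dots> = cfg 1 T1 (H1(4 := 0))" by (simp only: ss_1 e1 e2)
  finally show ?thesis using fin by (simp only: T0_def H0_def)
qed

definition outp :: "str \<Rightarrow> nat \<Rightarrow> str" where
  "outp b m = map (\<lambda>i. i < length b \<and> b ! i) [0..<m]"

lemma phaseC:
  assumes "k = length a"
  shows "\<exists>T' H'. ss \<phi> (1 + (k + 1) + (k + 1) + 1 + 1 + (m + 1)) (cfg 6 (loopT a Q m k) ((loopH k)(4 := int k)))
       = cfg 11 T' H' \<and> read_str (T' 2) = outp (\<phi> a) m"
proof -
  define T0 where "T0 = loopT a Q m k"
  define H0 where "H0 = (loopH k)(4 := int k)"
  define H1 where "H1 = H0(0 := H0 0 - 1, 2 := H0 2 - 1)"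
  have e1: "step Mach \<phi> (cfg 6 T0 H0) = cfg 8 T0 H1"
    unfolding H1_def by (rule s6a) (use assms in \<open>simp add: T0_def H0_def loopT_def loopH_def str_tape_def\<close>)
  have e2: "ss \<phi> (k + 1) (cfg 8 T0 H1) = cfg 9 T0 (H1(0 := 0))"
    by (rule ret8) (use assms in \<open>auto simp: T0_def loopT_def H1_def H0_def loopH_def str_tape_def\<close>)
  define Qa where "Qa = (\<lambda>x. if 0 \<le> x \<and> x < int (length a) then T0 0 x else if x = int (length a) then 0 else T0 1 x)"
  define T2 where "T2 = T0(1 := Qa, 2 := (T0 2)((H1(0 := 0)) 2 := 1))"
  define H2 where "H2 = (H1(0 := 0))(0 := int (length a), 1 := int (length a))"
  have e3: "ss \<phi> (length a + 1) (cfg 9 T0 (H1(0 := 0))) = cfg 2 T2 H2"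
    unfolding T2_def H2_def Qa_def by (rule copy9_0) (auto simp: T0_def loopT_def H1_def H0_def loopH_def)
  have T0a: "T0 0 = str_tape a" by (simp add: T0_def loopT_def)
  have rs: "read_str (T2 1) = a"
  proof -
    have "read_str (T2 1) = map (\<lambda>j. T2 1 (int j) = 2) [0..<length a]"
      by (rule read_str_eq) (auto simp: T2_def Qa_def T0a str_tape_def)
    also have "\<dots> = a" by (rule nth_equalityI) (auto simp: T2_def Qa_def T0a str_tape_def)
    finally show ?thesis .
  qed
  define T3 where "T3 = T2(1 := str_tape (\<phi> a))"
  define H3 where "H3 = H2(1 := 0)"
  have e4: "step Mach \<phi> (cfg 2 T2 H2) = cfg 3 T3 H3"
    unfolding T3_def H3_def by (simp only: step_query rs)
  have e5: "step Mach \<phi> (cfg 3 T3 H3) = cfg 10 T3 (H3(2 := H3 2 + 1))"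
    by (rule s3a) (simp add: T3_def T2_def H3_def H2_def)
  define T4 where "T4 = T3(2 := (\<lambda>x. if 0 \<le> x \<and> x < int m then (if T3 1 x = 2 then 2 else 1) else T3 2 x))"
  define H4 where "H4 = (H3(2 := H3 2 + 1))(1 := int m, 2 := int m, 3 := int m)"
  have e6: "ss \<phi> (m + 1) (cfg 10 T3 (H3(2 := H3 2 + 1))) = cfg 11 T4 H4"
    unfolding T4_def H4_def by (rule out10_0)
      (auto simp: T3_def T2_def T0_def loopT_def H3_def H2_def H1_def H0_def loopH_def)
  have T42: "T4 2 = (\<lambda>x. if 0 \<le> x \<and> x < int m then (if str_tape (\<phi> a) x = 2 then 2 else 1) else if x = -1 then 1 else 0)"
    by (auto simp: fun_eq_iff T4_def T3_def T2_def T0_def loopT_def blank_def H1_def H0_def loopH_def)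
  have rs2: "read_str (T4 2) = outp (\<phi> a) m"
  proof -
    have "read_str (T4 2) = map (\<lambda>j. T4 2 (int j) = 2) [0..<m]"
      by (rule read_str_eq) (auto simp: T42)
    also have "\<dots> = outp (\<phi> a) m" unfolding outp_def
      by (rule nth_equalityI) (auto simp: T42 str_tape_def)
    finally show ?thesis .
  qed
  have "ss \<phi> (1 + (k + 1) + (k + 1) + 1 + 1 + (m + 1)) (cfg 6 T0 H0) =
        ss \<phi> (m + 1) (ss \<phi> 1 (ss \<phi> 1 (ss \<phi> (k + 1) (ss \<phi> (k + 1) (ss \<phi> 1 (cfg 6 T0 H0))))))"
    by (simp only: ss_add)
  also have "\<dots> = cfg 11 T4 H4" by (simp only: ss_1 e1 e2 e3[folded assms] e4 e5 e6)
  finally show ?thesis using rs2 unfolding T0_def H0_def by blast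
qed

lemma wf_Mach: "wf_otm Mach"
proof -
  have "\<And>q syms. length syms = 5 \<Longrightarrow> (\<forall>s\<in>set syms. s < 3) \<Longrightarrow> q < 12 \<Longrightarrow>
      (case mdelta q syms of (q', w, m) \<Rightarrow>
           q' < 12 \<and> length w = 5 \<and> (\<forall>s\<in>set w. s < 3) \<and>
           length m = 5 \<and> (\<forall>d\<in>set m. d \<in> {-1, 0, 1}))"
  proof -
    fix q syms assume l: "length syms = (5::nat)" and s: "\<forall>s\<in>set syms. s < (3::nat)" and q: "q < (12::nat)"
    have s': "\<And>i. i < 5 \<Longrightarrow> syms ! i < 3" using s l by (simp add: nth_mem)
    have "syms ! 0 < 3" "syms ! 1 < 3" "syms ! 2 < 3" "syms ! 3 < 3" "syms ! 4 < 3" using s' by auto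
    thus "case mdelta q syms of (q', w, m) \<Rightarrow>
           q' < 12 \<and> length w = 5 \<and> (\<forall>s\<in>set w. s < 3) \<and>
           length m = 5 \<and> (\<forall>d\<in>set m. d \<in> {-1, 0, 1})"
      using q unfolding mdelta_def tr_def by (simp add: upt5 nomove_def)
  qed
  thus ?thesis unfolding wf_otm_def Mach_def by simp
qed

fun mx :: "strfun \<Rightarrow> nat \<Rightarrow> nat" where
  "mx \<phi> 0 = 0"
| "mx \<phi> (Suc k) = max (mx \<phi> k) (length (\<phi> (replicate k False)))"

definition costA :: "strfun \<Rightarrow> nat \<Rightarrow> nat" where
  "costA \<phi> k = (let L = length (\<phi> (replicate k False)) in (((k + 1) + 1) + (L + 1)) + (L + 1) + (L + 1))"

definition cost :: "strfun \<Rightarrow> nat \<Rightarrow> nat" where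
  "cost \<phi> k = costA \<phi> k + (1 + (k + 1))"

lemma phaseA': "ss \<phi> (costA \<phi> k) (cfg 1 (loopT a Q m k) (loopH k))
       = cfg 6 (loopT a (str_tape (\<phi> (replicate k False))) (max m (length (\<phi> (replicate k False)))) k) ((loopH k)(4 := int k))"
  unfolding costA_def Let_def by (rule phaseA)

lemma loop: "k \<le> length a \<Longrightarrow> \<exists>Q. ss \<phi> (\<Sum>j<k. cost \<phi> j) (cfg 1 (loopT a blank 0 0) (loopH 0)) = cfg 1 (loopT a Q (mx \<phi> k) k) (loopH k)"
proof (induction k)
  case 0
  show ?case by (auto simp: ss_0)
next
  case (Suc k)
  then obtain Q where Q: "ss \<phi> (\<Sum>j<k. cost \<phi> j) (cfg 1 (loopT a blank 0 0) (loopH 0)) = cfg 1 (loopT a Q (mx \<phi> k) k) (loopH k)"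
    by auto
  have "ss \<phi> (\<Sum>j<Suc k. cost \<phi> j) (cfg 1 (loopT a blank 0 0) (loopH 0))
      = ss \<phi> (1 + (k + 1)) (ss \<phi> (costA \<phi> k) (cfg 1 (loopT a Q (mx \<phi> k) k) (loopH k)))"
  proof -
    have "(\<Sum>j<Suc k. cost \<phi> j) = (\<Sum>j<k. cost \<phi> j) + costA \<phi> k + (1 + (k + 1))" by (simp add: cost_def)
    thus ?thesis by (simp only: ss_add[of \<phi> "(\<Sum>j<k. cost \<phi> j) + costA \<phi> k" "1 + (k + 1)"]
       ss_add[of \<phi> "\<Sum>j<k. cost \<phi> j" "costA \<phi> k"] Q)
  qed
  also have "\<dots> = cfg 1 (loopT a (str_tape (\<phi> (replicate k False))) (mx \<phi> (Suc k)) (k + 1)) (loopH (k + 1))"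
    using Suc.prems by (simp only: phaseA' mx.simps phaseB Suc_le_eq)
  finally show ?case by auto
qed

definition costC :: "strfun \<Rightarrow> nat \<Rightarrow> nat" where
  "costC \<phi> k = 1 + (k + 1) + (k + 1) + 1 + 1 + (mx \<phi> (Suc k) + 1)"

definition R :: "strfun \<Rightarrow> strfun" where
  "R \<phi> a = outp (\<phi> a) (mx \<phi> (Suc (length a)))"

lemma init_eq: "init_config Mach a = cfg 1 (loopT a blank 0 0) (loopH 0)"
  unfolding init_config_def Mach_def cfg_def upt5 loopT_def loopH_def un_def blank_def
  by (simp add: str_tape_def fun_eq_iff numeral_eq_Suc)

lemma correct: "halts_with Mach \<phi> a ((\<Sum>j<length a. cost \<phi> j) + costA \<phi> (length a) + costC \<phi> (length a)) (R \<phi> a)"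
proof -
  let ?n = "length a"
  obtain Q where Q: "ss \<phi> (\<Sum>j<?n. cost \<phi> j) (cfg 1 (loopT a blank 0 0) (loopH 0)) = cfg 1 (loopT a Q (mx \<phi> ?n) ?n) (loopH ?n)"
    using loop[of ?n a \<phi>] by auto
  obtain T' H' where C: "ss \<phi> (1 + (?n + 1) + (?n + 1) + 1 + 1 + (mx \<phi> (Suc ?n) + 1)) (cfg 6 (loopT a (str_tape (\<phi> (replicate ?n False))) (mx \<phi> (Suc ?n)) ?n) ((loopH ?n)(4 := int ?n)))
       = cfg 11 T' H'" and rs: "read_str (T' 2) = outp (\<phi> a) (mx \<phi> (Suc ?n))"
    using phaseC[where k="length a" and a=a and \<phi>=\<phi> and Q="str_tape (\<phi> (replicate ?n False))" and m="mx \<phi> (Suc ?n)", OF refl]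
    by blast
  have "run Mach \<phi> a ((\<Sum>j<length a. cost \<phi> j) + costA \<phi> (length a) + costC \<phi> (length a))
     = ss \<phi> (costC \<phi> ?n) (ss \<phi> (costA \<phi> ?n) (ss \<phi> (\<Sum>j<?n. cost \<phi> j) (cfg 1 (loopT a blank 0 0) (loopH 0))))"
    unfolding run_def ss_def[symmetric] init_eq
    by (simp only: ss_add[of \<phi> "(\<Sum>j<length a. cost \<phi> j) + costA \<phi> (length a)" "costC \<phi> (length a)"]
       ss_add[of \<phi> "\<Sum>j<length a. cost \<phi> j" "costA \<phi> (length a)"])
  also have "\<dots> = ss \<phi> (costC \<phi> ?n) (cfg 6 (loopT a (str_tape (\<phi> (replicate ?n False))) (mx \<phi> (Suc ?n)) ?n) ((loopH ?n)(4 := int ?n)))"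
    by (simp only: Q phaseA' mx.simps)
  also have "\<dots> = cfg 11 T' H'" unfolding costC_def by (rule C)
  finally have "run Mach \<phi> a ((\<Sum>j<length a. cost \<phi> j) + costA \<phi> (length a) + costC \<phi> (length a)) = cfg 11 T' H'" .
  thus ?thesis unfolding halts_with_def R_def using rs by (simp add: cfg_def Mach_def upt5)
qed

lemma size_le: "length b \<le> n \<Longrightarrow> length (\<phi> b) \<le> sizefun \<phi> n"
proof -
  assume b: "length b \<le> n"
  have "finite {xs :: bool list. set xs \<subseteq> UNIV \<and> length xs \<le> n}"
    by (rule finite_lists_length_le) simp
  hence "finite {a :: str. length a \<le> n}" by simp
  thus ?thesis unfolding sizefun_def using b by (intro Max_ge) auto
qed

lemma mx_le: "k \<le> Suc n \<Longrightarrow> mx \<phi> k \<le> sizefun \<phi> n"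
  by (induction k) (auto intro: size_le)

lemma time_bound:
  "(\<Sum>j<length a. cost \<phi> j) + costA \<phi> (length a) + costC \<phi> (length a)
     \<le> 20 * ((length a + 1) * (length a + 1 + sizefun \<phi> (length a)))"
proof -
  define n where "n = length a"
  define s where "s = sizefun \<phi> n"
  have c: "cost \<phi> j \<le> 2 * n + 3 * s + 7" if "j < n" for j
  proof -
    have "length (\<phi> (replicate j False)) \<le> s" unfolding s_def using that by (intro size_le) simp
    thus ?thesis using that unfolding cost_def costA_def Let_def by simp
  qed
  have "(\<Sum>j<n. cost \<phi> j) \<le> (\<Sum>j<n. 2 * n + 3 * s + 7)" by (rule sum_mono) (use c in auto)
  hence 1: "(\<Sum>j<n. cost \<phi> j) \<le> n * (2 * n + 3 * s + 7)" by simp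
  have "length (\<phi> (replicate n False)) \<le> s" unfolding s_def by (intro size_le) simp
  hence 2: "costA \<phi> n \<le> n + 3 * s + 5" unfolding costA_def Let_def by simp
  have "mx \<phi> (Suc n) \<le> s" unfolding s_def by (rule mx_le) simp
  hence 3: "costC \<phi> n \<le> 2 * n + s + 6" unfolding costC_def by simp
  have 4: "n * (2 * n + 3 * s + 7) + (n + 3 * s + 5) + (2 * n + s + 6) \<le> 20 * ((n + 1) * (n + 1 + s))"
    by (simp add: algebra_simps)
  show ?thesis using 1 2 3 4 unfolding n_def[symmetric] s_def[symmetric] by linarith
qed

lemma sop_P: "second_order_poly (\<lambda>l n. 20 * ((n + 1) * (n + 1 + l n)))"
proof -
  have v: "second_order_poly (\<lambda>l n. n)" by (rule sop_var)
  have c1: "second_order_poly (\<lambda>l n. 1)" by (rule sop_const)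
  have c20: "second_order_poly (\<lambda>l n. 20)" by (rule sop_const)
  have n1: "second_order_poly (\<lambda>l n. n + 1)" using sop_add[OF v c1] by simp
  have ln: "second_order_poly (\<lambda>l n. l n)" using sop_app[OF v] by simp
  have a: "second_order_poly (\<lambda>l n. n + 1 + l n)" using sop_add[OF n1 ln] by simp
  have m: "second_order_poly (\<lambda>l n. (n + 1) * (n + 1 + l n))" using sop_mult[OF n1 a] by simp
  show ?thesis using sop_mult[OF c20 m] by simp
qed

lemma mx_mono: "k \<le> k' \<Longrightarrow> mx \<phi> k \<le> mx \<phi> k'"
  by (induction k') (auto simp: le_Suc_eq)

lemma R_lm: "length_monotone (R \<phi>)"
  unfolding length_monotone_def R_def outp_def length_map length_upt
  by (simp del: mx.simps add: mx_mono)

lemma mx_lm: "length_monotone \<phi> \<Longrightarrow> mx \<phi> (Suc n) = length (\<phi> (replicate n False))"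
proof (induction n)
  case 0 then show ?case by simp
next
  case (Suc n)
  have "length (\<phi> (replicate n False)) \<le> length (\<phi> (replicate (Suc n) False))"
    using Suc.prems unfolding length_monotone_def by simp
  then show ?case using Suc by simp
qed

lemma R_id: "length_monotone \<phi> \<Longrightarrow> R \<phi> = \<phi>"
proof (rule ext)
  fix a assume lm: "length_monotone \<phi>"
  have "length (\<phi> (replicate (length a) False)) = length (\<phi> a)"
    using lm unfolding length_monotone_def by (metis le_antisym length_replicate order_refl)
  hence "mx \<phi> (Suc (length a)) = length (\<phi> a)" using mx_lm[OF lm, of "length a"] by (simp del: mx.simps)
  thus "R \<phi> a = \<phi> a" unfolding R_def outp_def by (auto intro: nth_equalityI)
qed

theorem mainTheorem7:
  shows "\<exists>R :: strfun \<Rightarrow> strfun.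
           poly_time_functional R \<and>
           (\<forall>\<phi>. length_monotone (R \<phi>)) \<and>
           (\<forall>\<phi>. length_monotone \<phi> \<longrightarrow> R \<phi> = \<phi>)"
proof (intro exI conjI allI impI)
  show "poly_time_functional R"
    unfolding poly_time_functional_def
  proof (rule exI[where x=Mach], rule exI[where x="\<lambda>l n. 20 * ((n + 1) * (n + 1 + l n))"], intro conjI allI)
    show "wf_otm Mach" by (rule wf_Mach)
    show "second_order_poly (\<lambda>l n. 20 * ((n + 1) * (n + 1 + l n)))" by (rule sop_P)
    fix \<phi> a
    show "\<exists>t\<le>20 * ((length a + 1) * (length a + 1 + sizefun \<phi> (length a))). halts_with Mach \<phi> a t (R \<phi> a)"
      by (rule exI[where x="(\<Sum>j<length a. cost \<phi> j) + costA \<phi> (length a) + costC \<phi> (length a)"], rule conjI,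
          rule time_bound, rule correct)
  qed
  fix \<phi>
  show "length_monotone (R \<phi>)" by (rule R_lm)
next
  fix \<phi> :: strfun assume "length_monotone \<phi>" thus "R \<phi> = \<phi>" by (rule R_id)
qed

end
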